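(* Fix $\theta>0$ and consider the Feller coupling with parameter $\theta$. Then, as $n\to\infty$, \[\mathbb{E}\left\{\sup_{0\le t\le1}\left|\log\mathsf{invol}_{\lfloor n^t\rfloor}(C^{(n)})-\log\mathsf{B}_{\lfloor n^t\rfloor}(Z_0)\right|\right\}=O(\log n).\]
   Context: Feller coupling: $\beta_1,\beta_2,\ldots$ are independent Bernoulli random variables with $\Pr(\beta_j=1)=\theta/(\theta+j-1)$. A $k$-spacing occurs in a $0/1$ sequence starting at position $\ell-k$ and ending at $\ell$ if the entries at positions $\ell-k$ and $\ell$ are $1$ and all entries strictly between are $0$. $C^{(n)}=(c^{(n)}_1,c^{(n)}_2,\ldots)$ with $c^{(n)}_k$ the number of $k$-spacings in $1\beta_2\cdots\beta_n1$ (this has the law of the cycle counts of an ESF$(\theta)$ permutation of $[n]$), and $Z_0=(Z_{1,0},Z_{2,0},\ldots)$ with $Z_{k,0}$ the number of $k$-spacings in $\beta_1\beta_2\cdots$. For a sequence $a$ of nonnegative integers and $m\ge1$: $\mathsf{B}_m(a)=\prod_{k=1}^m k^{a_k}$ and $\mathsf{invol}_m(a)=\mathsf{B}_m(a)\prod_{k=1}^m\sum_{j=0}^{\lfloor a_k/2\rfloor}\frac{(a_k)_{2j}}{(2k)^j j!}$, with $(x)_r=x(x-1)\cdots(x-r+1)$. *)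

theory Defs
  imports "HOL-Probability.Probability"
begin

definition spacings :: "(nat \<Rightarrow> bool) \<Rightarrow> nat \<Rightarrow> nat" where
  "spacings x k = card {l. 1 \<le> k \<and> k \<le> l \<and> x (l - k) \<and> x l \<and> (\<forall>i. l - k < i \<and> i < l \<longrightarrow> \<not> x i)}"

text \<open>The finite word 1 b_2 ... b_n 1 placed on positions 1..n+1 (all other positions 0).\<close>
definition feller_word :: "(nat \<Rightarrow> bool) \<Rightarrow> nat \<Rightarrow> nat \<Rightarrow> bool" where
  "feller_word b n j = (j = 1 \<or> j = n + 1 \<or> (2 \<le> j \<and> j \<le> n \<and> b j))"

text \<open>Cycle count vector C^(n): C^(n)_k = number of k-spacings in 1 b_2 ... b_n 1.\<close>
definition cyc_counts :: "(nat \<Rightarrow> bool) \<Rightarrow> nat \<Rightarrow> nat \<Rightarrow> nat" where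
  "cyc_counts b n k = spacings (feller_word b n) k"

text \<open>Z_0: Z_{k,0} = number of k-spacings in the infinite word b_1 b_2 ... (positions 1,2,...).\<close>
definition Z0 :: "(nat \<Rightarrow> bool) \<Rightarrow> nat \<Rightarrow> nat" where
  "Z0 b k = spacings (\<lambda>j. 1 \<le> j \<and> b j) k"

definition falling :: "nat \<Rightarrow> nat \<Rightarrow> real" where
  "falling x r = (\<Prod>i<r. (real x - real i))"

definition Bm :: "nat \<Rightarrow> (nat \<Rightarrow> nat) \<Rightarrow> real" where
  "Bm m a = (\<Prod>k=1..m. real k ^ a k)"

definition invol :: "nat \<Rightarrow> (nat \<Rightarrow> nat) \<Rightarrow> real" where
  "invol m a = Bm m a * (\<Prod>k=1..m. \<Sum>j=0..a k div 2.
      falling (a k) (2 * j) / ((2 * real k) ^ j * fact j))"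

end

theory Submission
  imports Defs
begin

definition Sk :: "nat \<Rightarrow> nat \<Rightarrow> real" where
  "Sk k a = (\<Sum>j=0..a div 2. falling a (2 * j) / ((2 * real k) ^ j * fact j))"

lemma falling_nonneg: "r \<le> a \<Longrightarrow> 0 \<le> falling a r"
  unfolding falling_def by (intro prod_nonneg) auto

lemma falling_Suc2: "falling a (2 * Suc j) = falling a (2*j) * ((real a - real (2*j)) * (real a - real (2*j+1)))"
  unfolding falling_def by (simp add: mult.assoc)

lemma falling_le: "2 * j \<le> a \<Longrightarrow> falling a (2 * j) \<le> (real a * (real a - 1)) ^ j"
proof (induction j)
  case 0 then show ?case by (simp add: falling_def)
next
  case (Suc j)
  have f0: "0 \<le> falling a (2*j)" using Suc.prems by (intro falling_nonneg) auto
  have a1: "0 \<le> (real a - real (2*j)) * (real a - real (2*j+1))"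
    using Suc.prems by (intro mult_nonneg_nonneg) auto
  have a2: "(real a - real (2*j)) * (real a - real (2*j+1)) \<le> real a * (real a - 1)"
    using Suc.prems by (intro mult_mono) auto
  have "falling a (2 * Suc j) = falling a (2*j) * ((real a - real (2*j)) * (real a - real (2*j+1)))"
    by (rule falling_Suc2)
  also have "\<dots> \<le> (real a * (real a - 1)) ^ j * (real a * (real a - 1))"
    using Suc f0 a1 a2 by (intro mult_mono) auto
  finally show ?case by (simp add: mult.commute)
qed

lemma Sk_ge1: "1 \<le> Sk k a"
proof -
  have "Sk k a = (\<Sum>j\<in>insert 0 {1..a div 2}. falling a (2 * j) / ((2 * real k) ^ j * fact j))"
    unfolding Sk_def by (intro sum.cong) auto
  also have "\<dots> = 1 + (\<Sum>j\<in>{1..a div 2}. falling a (2 * j) / ((2 * real k) ^ j * fact j))"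
    by (subst sum.insert) (auto simp: falling_def)
  also have "\<dots> \<ge> 1"
    by (intro add_increasing2 sum_nonneg divide_nonneg_nonneg falling_nonneg) auto
  finally show ?thesis .
qed

lemma Sk_le: assumes "k \<ge> 1" shows "Sk k a \<le> exp (real a * (real a - 1) / (2 * real k))"
proof -
  define x where "x = real a * (real a - 1) / (2 * real k)"
  have x0: "0 \<le> x" unfolding x_def using assms by (cases a) auto
  have "Sk k a \<le> (\<Sum>j\<in>{..a div 2}. x ^ j / fact j)"
    unfolding Sk_def atLeast0AtMost
  proof (intro sum_mono)
    fix j assume j: "j \<in> {..a div 2}"
    have "falling a (2 * j) / ((2 * real k) ^ j * fact j)
        \<le> (real a * (real a - 1)) ^ j / ((2 * real k) ^ j * fact j)"
      using j assms by (intro divide_right_mono falling_le) auto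
    also have "\<dots> = x ^ j / fact j" unfolding x_def by (simp add: power_divide)
    finally show "falling a (2 * j) / ((2 * real k) ^ j * fact j) \<le> x ^ j / fact j" .
  qed
  also have "\<dots> \<le> (\<Sum>j. x ^ j / fact j)"
    using exp_converges[of x] x0
    by (intro sum_le_suminf) (auto simp: sums_iff divide_inverse mult.commute scaleR_conv_of_real)
  also have "\<dots> = exp x"
    using exp_converges[of x] by (simp add: sums_iff divide_inverse mult.commute scaleR_conv_of_real)
  finally show ?thesis unfolding x_def .
qed

lemma ln_Sk: assumes "k \<ge> 1" shows "0 \<le> ln (Sk k a)" "ln (Sk k a) \<le> real a * (real a - 1) / (2 * real k)"
proof -
  have p: "0 < Sk k a" using Sk_ge1[of k a] by linarith
  show "0 \<le> ln (Sk k a)" using Sk_ge1[of k a] by simp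
  show "ln (Sk k a) \<le> real a * (real a - 1) / (2 * real k)"
    using Sk_le[OF assms, of a] p by (metis ln_exp ln_le_cancel_iff exp_gt_zero)
qed

lemma invol_Sk: "invol m a = Bm m a * (\<Prod>k=1..m. Sk k (a k))"
  unfolding invol_def Sk_def by simp

lemma Bm_pos: "0 < Bm m a" unfolding Bm_def by (intro prod_pos) auto

lemma ln_Bm: "ln (Bm m a) = (\<Sum>k=1..m. real (a k) * ln (real k))"
  unfolding Bm_def by (subst ln_prod) (auto simp: ln_realpow)

lemma ln_invol: "ln (invol m a) = (\<Sum>k=1..m. real (a k) * ln (real k)) + (\<Sum>k=1..m. ln (Sk k (a k)))"
proof -
  have nz: "\<And>k. Sk k (a k) \<noteq> 0" using Sk_ge1 by (metis not_one_le_zero)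
  have p: "(\<Prod>k=1..m. Sk k (a k)) \<noteq> 0" using nz by simp
  have "ln (invol m a) = ln (Bm m a) + ln (\<Prod>k=1..m. Sk k (a k))"
    unfolding invol_Sk using Bm_pos[of m a] p by (subst ln_mult) auto
  also have "ln (\<Prod>k=1..m. Sk k (a k)) = (\<Sum>k=1..m. ln (Sk k (a k)))"
    using nz by (subst ln_prod) auto
  finally show ?thesis by (simp add: ln_Bm)
qed

definition Sp :: "(nat \<Rightarrow> bool) \<Rightarrow> nat \<Rightarrow> nat set" where
  "Sp x k = {l. 1 \<le> k \<and> k \<le> l \<and> x (l - k) \<and> x l \<and> (\<forall>i. l - k < i \<and> i < l \<longrightarrow> \<not> x i)}"

lemma spacings_Sp: "spacings x k = card (Sp x k)"
  unfolding spacings_def Sp_def ..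

definition yw :: "(nat \<Rightarrow> bool) \<Rightarrow> nat \<Rightarrow> bool" where
  "yw b j = (1 \<le> j \<and> b j)"

lemma Z0_Sp: "Z0 b k = card (Sp (yw b) k)"
  unfolding Z0_def spacings_Sp yw_def ..

lemma cyc_Sp: "cyc_counts b n k = card (Sp (feller_word b n) k)"
  unfolding cyc_counts_def spacings_Sp ..

lemma Sp_gap: "l \<in> Sp x k \<Longrightarrow> l' \<in> Sp x k \<Longrightarrow> l < l' \<Longrightarrow> l + k \<le> l'"
  unfolding Sp_def by (cases "l + k \<le> l'") auto

lemma Sp_fw_sub: "Sp (feller_word b n) k \<subseteq> {k+1..n+1}"
proof
  fix l assume "l \<in> Sp (feller_word b n) k"
  then have "k \<le> l" "feller_word b n (l - k)" "feller_word b n l" unfolding Sp_def by auto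
  then show "l \<in> {k+1..n+1}" unfolding feller_word_def by auto
qed

lemma finite_Sp_fw: "finite (Sp (feller_word b n) k)"
  by (rule finite_subset[OF Sp_fw_sub]) simp

lemma fw_yw: "b 1 \<Longrightarrow> j \<le> n \<Longrightarrow> feller_word b n j = yw b j"
  unfolding feller_word_def yw_def by (cases "j = 1") auto

lemma Sp_agree: assumes "b 1" "l \<le> n"
  shows "l \<in> Sp (feller_word b n) k \<longleftrightarrow> l \<in> Sp (yw b) k"
proof -
  have e: "\<And>j. j \<le> l \<Longrightarrow> feller_word b n j = yw b j" using assms fw_yw by auto
  show ?thesis
  proof
    assume "l \<in> Sp (feller_word b n) k"
    then show "l \<in> Sp (yw b) k" unfolding Sp_def using e by (simp del: One_nat_def)
  next
    assume "l \<in> Sp (yw b) k"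
    then show "l \<in> Sp (feller_word b n) k" unfolding Sp_def using e by (simp del: One_nat_def)
  qed
qed

lemma end_unique_aux: assumes "L \<in> Sp x k" "L \<in> Sp x k'" "k < k'" shows False
proof -
  from assms have "1 \<le> k" "k' \<le> L" "x (L - k)" "\<forall>i. L - k' < i \<and> i < L \<longrightarrow> \<not> x i"
    unfolding Sp_def by auto
  moreover have "L - k' < L - k" "L - k < L" using assms(3) calculation by auto
  ultimately show False by blast
qed

lemma end_unique: assumes "L \<in> Sp x k" "L \<in> Sp x k'" shows "k = k'"
  using end_unique_aux[OF assms] end_unique_aux[OF assms(2,1)] by (cases k k' rule: linorder_cases) auto

lemma sum_end_le1: assumes "finite K"
  shows "(\<Sum>k\<in>K. of_bool (L \<in> Sp x k) :: ennreal) \<le> 1"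
proof -
  have "card (K \<inter> {k. L \<in> Sp x k}) \<le> Suc 0"
    using assms by (subst card_le_Suc0_iff_eq) (auto dest: end_unique)
  then show ?thesis using assms by simp
qed

lemma diff_bound: assumes b1: "b 1"
  shows "ennreal \<bar>real (card (Sp (feller_word b n) k)) - real (card (Sp (yw b) k))\<bar>
     \<le> of_bool (n+1 \<in> Sp (feller_word b n) k) + emeasure (count_space UNIV) {l. n < l \<and> l \<in> Sp (yw b) k}"
proof -
  define T where "T = {l. n < l \<and> l \<in> Sp (yw b) k}"
  define A where "A = Sp (yw b) k \<inter> {..n}"
  have fA: "finite A" unfolding A_def by auto
  have X: "Sp (feller_word b n) k = A \<union> (if n+1 \<in> Sp (feller_word b n) k then {n+1} else {})"
  proof -
    have "\<And>l. l \<in> Sp (feller_word b n) k \<Longrightarrow> l \<le> n+1" using Sp_fw_sub[of b n k] by auto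
    show ?thesis
    proof (rule set_eqI)
      fix l
      show "l \<in> Sp (feller_word b n) k \<longleftrightarrow> l \<in> A \<union> (if n+1 \<in> Sp (feller_word b n) k then {n+1} else {})"
      proof (cases "l \<le> n")
        case True
        then show ?thesis unfolding A_def using Sp_agree[of b l n k, OF b1 True] by auto
      next
        case False
        have nA: "l \<notin> A" unfolding A_def using False by auto
        show ?thesis
        proof
          assume "l \<in> Sp (feller_word b n) k"
          moreover then have "l = n+1" using \<open>\<And>l. l \<in> Sp (feller_word b n) k \<Longrightarrow> l \<le> n+1\<close>[of l] False by linarith
          ultimately show "l \<in> A \<union> (if n+1 \<in> Sp (feller_word b n) k then {n+1} else {})" by simp
        next
          assume "l \<in> A \<union> (if n+1 \<in> Sp (feller_word b n) k then {n+1} else {})"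
          then show "l \<in> Sp (feller_word b n) k" using nA by (auto split: if_splits)
        qed
      qed
    qed
  qed
  have cX: "card (Sp (feller_word b n) k) = card A + of_bool (n+1 \<in> Sp (feller_word b n) k)"
  proof (cases "n+1 \<in> Sp (feller_word b n) k")
    case True
    have "Sp (feller_word b n) k = insert (n+1) A" using X True by simp
    moreover have "n+1 \<notin> A" unfolding A_def by simp
    ultimately show ?thesis using True fA by simp
  next
    case False
    have "Sp (feller_word b n) k = A" using X False by simp
    then show ?thesis using False by simp
  qed
  show ?thesis
  proof (cases "finite T")
    case False
    then show ?thesis unfolding T_def[symmetric] by (simp add: emeasure_count_space)
  next
    case True
    have Y: "Sp (yw b) k = A \<union> T" "A \<inter> T = {}" unfolding A_def T_def by auto
    have cY: "card (Sp (yw b) k) = card A + card T"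
      using Y fA True by (simp add: card_Un_disjoint)
    have "\<bar>real (card (Sp (feller_word b n) k)) - real (card (Sp (yw b) k))\<bar>
        \<le> of_bool (n+1 \<in> Sp (feller_word b n) k) + real (card T)"
      unfolding cX cY by auto
    then have "ennreal \<bar>real (card (Sp (feller_word b n) k)) - real (card (Sp (yw b) k))\<bar>
        \<le> ennreal (of_bool (n+1 \<in> Sp (feller_word b n) k) + real (card T))"
      by (rule ennreal_leI)
    also have "\<dots> = of_bool (n+1 \<in> Sp (feller_word b n) k) + of_nat (card T)"
      by (simp add: ennreal_plus[symmetric] del: ennreal_plus) (simp add: ennreal_of_nat_eq_real_of_nat)
    finally show ?thesis using True unfolding T_def[symmetric] by (simp add: emeasure_count_space)
  qed
qed

lemma pairs_card: fixes S :: "nat set" assumes "finite S"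
  shows "real (card S) * (real (card S) - 1) = 2 * real (card {p\<in>S\<times>S. fst p < snd p})"
proof -
  define P where "P = {p\<in>S\<times>S. fst p < snd p}"
  define Q where "Q = {p\<in>S\<times>S. snd p < fst p}"
  define D where "D = {p\<in>S\<times>S. fst p = snd p}"
  have U: "S \<times> S = D \<union> (P \<union> Q)" unfolding D_def P_def Q_def by (auto simp: linorder_neq_iff)
  have fin: "finite D" "finite P" "finite Q" unfolding D_def P_def Q_def using assms by auto
  have cD: "card D = card S"
  proof -
    have "D = (\<lambda>x. (x,x)) ` S" unfolding D_def by auto
    then show ?thesis by (simp add: card_image inj_on_def)
  qed
  have cQ: "card Q = card P"
  proof -
    have "Q = prod.swap ` P" unfolding P_def Q_def by auto
    then show ?thesis by (simp add: card_image)
  qed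
  have c1: "card (S \<times> S) = card D + card (P \<union> Q)"
    unfolding U using fin by (intro card_Un_disjoint) (auto simp: D_def P_def Q_def)
  have c2: "card (P \<union> Q) = card P + card Q"
    using fin by (intro card_Un_disjoint) (auto simp: P_def Q_def)
  have "card S * card S = card D + (card P + card Q)"
    using c1 c2 by (simp add: card_cartesian_product)
  then have "real (card S) * real (card S) = real (card S) + 2 * real (card P)"
    unfolding cD cQ by (metis mult_2 of_nat_add of_nat_mult)
  then show ?thesis unfolding P_def[symmetric] by (simp add: algebra_simps)
qed

lemma recip_identity:
  "real k * (\<Sum>s=1..N. 1 / (real s * (real s + real k))) =
     (\<Sum>s=1..k. 1 / real s) - (\<Sum>s=N+1..N+k. 1 / real s)"
proof (induction N)
  case 0 then show ?case by simp
next
  case (Suc N)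
  have a: "(\<Sum>s=N+1..N+k. 1 / real s) = (if k = 0 then 0 else 1 / real (N+1) + (\<Sum>s=N+2..N+k. 1 / real s))"
  proof (cases "k = 0")
    case False
    then show ?thesis by (subst sum.atLeast_Suc_atMost) auto
  qed simp
  have b: "(\<Sum>s=N+2..N+k+1. 1 / real s) = (if k = 0 then 0 else (\<Sum>s=N+2..N+k. 1 / real s) + 1 / real (N+k+1))"
  proof (cases k)
    case (Suc k') then show ?thesis by (simp add: add.commute)
  qed simp
  have c: "real k / ((real N + 1) * (real N + 1 + real k)) = 1 / real (N+1) - 1 / real (N+k+1)"
    by (simp add: field_simps)
  have "real k * (\<Sum>s=1..Suc N. 1 / (real s * (real s + real k)))
      = real k * (\<Sum>s=1..N. 1 / (real s * (real s + real k))) + real k / ((real N + 1) * (real N + 1 + real k))"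
    by (simp add: algebra_simps)
  also have "\<dots> = (\<Sum>s=1..k. 1 / real s) - (\<Sum>s=Suc N+1..Suc N+k. 1 / real s)"
    unfolding Suc c using a b by (cases "k = 0") (auto simp: add.commute)
  finally show ?case .
qed

definition Hs :: "nat \<Rightarrow> real" where "Hs k = (\<Sum>s=1..k. 1 / real s)"

lemma Hs_nonneg: "0 \<le> Hs k" unfolding Hs_def by (intro sum_nonneg) auto

lemma Hs_Suc: "Hs (Suc k) = Hs k + 1 / real (Suc k)" unfolding Hs_def by simp

lemma recip_sum_le: assumes "k \<ge> 1"
  shows "(\<Sum>s=1..N. 1 / (real s * (real s + real k))) \<le> Hs k / real k"
proof -
  have "0 \<le> (\<Sum>s=N+1..N+k. 1 / real s)" by (intro sum_nonneg) auto
  then have "real k * (\<Sum>s=1..N. 1 / (real s * (real s + real k))) \<le> Hs k"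
    unfolding recip_identity Hs_def by linarith
  then show ?thesis using assms by (simp add: field_simps)
qed

lemma Hs_ln: "n \<ge> 1 \<Longrightarrow> Hs n \<le> 1 + ln (real n)"
proof (induction n rule: dec_induct)
  case base then show ?case by (simp add: Hs_def)
next
  case (step n)
  have "ln (real n / real (Suc n)) \<le> real n / real (Suc n) - 1"
    using step by (intro ln_le_minus_one) auto
  also have "\<dots> = - 1 / real (Suc n)" by (simp add: field_simps)
  finally have "1 / real (Suc n) \<le> ln (real (Suc n)) - ln (real n)"
    using step by (simp add: ln_div)
  then show ?case using step by (simp add: Hs_Suc)
qed

lemma Hs_series_aux: "(\<Sum>k=1..n. Hs k / (real k * (real k + 1))) + (Hs n + 2) / (real n + 1) \<le> 3"
proof (induction n)
  case 0 then show ?case by (simp add: Hs_def)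
next
  case (Suc n)
  have key: "Hs (Suc n) / ((real n + 1) * (real n + 2)) + (Hs (Suc n) + 2) / (real n + 2)
        \<le> (Hs n + 2) / (real n + 1)"
  proof -
    have e: "Hs (Suc n) = Hs n + 1 / (real n + 1)" by (simp add: Hs_Suc add.commute)
    have h0: "0 \<le> Hs n" by (rule Hs_nonneg)
    define h where "h = Hs n"
    define x where "x = real n"
    have x0: "0 \<le> x" unfolding x_def by simp
    have n1: "x + 1 \<noteq> 0" "x + 2 \<noteq> 0" using x0 by auto
    define D where "D = (x+1)^2*(x+2)"
    have D0: "0 < D" unfolding D_def using x0 by simp
    have eA: "(h + 1 / (x + 1)) / ((x + 1) * (x + 2)) = (h*(x+1)+1) / D"
      unfolding D_def using n1 by (simp add: field_simps power2_eq_square)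
    have eB1: "(h + 1 / (x + 1) + 2) / (x + 2) = ((h+2)*(x+1)+1) / ((x+1)*(x+2))"
      using n1 by (simp add: field_simps)
    have eB2: "((h+2)*(x+1)+1) / ((x+1)*(x+2)) = ((x+1) * ((h+2)*(x+1)+1)) / ((x+1) * ((x+1)*(x+2)))"
      using n1 by simp
    have eB: "(h + 1 / (x + 1) + 2) / (x + 2) = (h*(x+1) + 1 + 2*(x+1))*(x+1) / D"
      unfolding eB1 eB2 D_def by (simp add: algebra_simps power2_eq_square)
    have eR1: "(h+2)/(x+1) = (((x+1)*(x+2))*(h+2)) / (((x+1)*(x+2))*(x+1))"
      using n1 by simp
    have eR: "(h+2)/(x+1) = (h+2)*(x+1)*(x+2) / D"
      unfolding eR1 D_def by (simp add: algebra_simps power2_eq_square)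
    have num: "(h*(x+1)+1) + (h*(x+1) + 1 + 2*(x+1))*(x+1) \<le> (h+2)*(x+1)*(x+2)"
    proof -
      have "(h+2)*(x+1)*(x+2) - ((h*(x+1)+1) + (h*(x+1) + 1 + 2*(x+1))*(x+1)) = x"
        by (simp add: algebra_simps)
      then show ?thesis using x0 by linarith
    qed
    have "(h + 1 / (x + 1)) / ((x + 1) * (x + 2)) + (h + 1 / (x + 1) + 2) / (x + 2) \<le> (h+2)/(x+1)"
      unfolding eA eB eR add_divide_distrib[symmetric] using D0 num by (intro divide_right_mono) auto
    then show ?thesis unfolding e h_def[symmetric] x_def[symmetric] by (simp add: add.commute)
  qed
  show ?case using Suc key by (simp add: add.commute add.left_commute)
qed

lemma Hs_series: "(\<Sum>k=1..n. Hs k / (real k)^2) \<le> 6"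
proof -
  have "(\<Sum>k=1..n. Hs k / (real k)^2) \<le> (\<Sum>k=1..n. 2 * (Hs k / (real k * (real k + 1))))"
  proof (intro sum_mono)
    fix k assume k: "k \<in> {1..n}"
    have "Hs k / (real k)^2 = Hs k * (2 / (2 * (real k)^2))" by simp
    also have "\<dots> \<le> Hs k * (2 / (real k * (real k + 1)))"
      using k Hs_nonneg[of k] by (intro mult_left_mono divide_left_mono) (auto simp: power2_eq_square)
    also have "Hs k * (2 / (real k * (real k + 1))) = 2 * (Hs k / (real k * (real k + 1)))"
      by (simp only: times_divide_eq_right mult.commute)
    finally show "Hs k / (real k)^2 \<le> 2 * (Hs k / (real k * (real k + 1)))" .
  qed
  also have "\<dots> = 2 * (\<Sum>k=1..n. Hs k / (real k * (real k + 1)))" by (simp add: sum_distrib_left)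
  also have "\<dots> \<le> 2 * 3"
    using Hs_series_aux[of n] Hs_nonneg[of n] by (simp add: divide_nonneg_nonneg) (smt (verit) divide_nonneg_nonneg of_nat_0_le_iff)
  finally show ?thesis by simp
qed

lemma swap_sum: "(\<Sum>k=1..n. \<Sum>l=n+1..n+k. 1 / (real l - real k)) = real n"
proof -
  have inner: "(\<Sum>l=n+1..n+k. 1 / (real l - real k)) = (\<Sum>s\<in>{s\<in>{1..n}. n + 1 \<le> s + k}. 1 / real s)"
    if k: "k \<in> {1..n}" for k
  proof -
    have "(\<Sum>l=n+1..n+k. 1 / (real l - real k)) = (\<Sum>l=(n+1-k)+k..n+k. 1 / (real l - real k))"
      using k by simp
    also have "\<dots> = (\<Sum>s=n+1-k..n. 1 / real s)"
      by (subst sum.shift_bounds_cl_nat_ivl) simp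
    also have "{n+1-k..n} = {s\<in>{1..n}. n + 1 \<le> s + k}" using k by auto
    finally show ?thesis .
  qed
  have "(\<Sum>k=1..n. \<Sum>l=n+1..n+k. 1 / (real l - real k))
       = (\<Sum>k=1..n. \<Sum>s\<in>{s\<in>{1..n}. n + 1 \<le> s + k}. 1 / real s)"
  proof (rule sum.cong[OF refl])
    fix k assume "k \<in> {1..n}"
    then show "(\<Sum>l=n+1..n+k. 1 / (real l - real k)) = (\<Sum>s\<in>{s\<in>{1..n}. n + 1 \<le> s + k}. 1 / real s)"
      by (rule inner)
  qed
  also have "\<dots> = (\<Sum>s=1..n. \<Sum>k\<in>{k\<in>{1..n}. n + 1 \<le> s + k}. 1 / real s)"
    by (rule sum.swap_restrict[of "{1..n}" "{1..n}" "\<lambda>k s. 1 / real s" "\<lambda>k s. n + 1 \<le> s + k"]) auto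
  also have "\<dots> = (\<Sum>s=1..n. 1)"
  proof (intro sum.cong refl)
    fix s assume s: "s \<in> {1..n}"
    have "{k\<in>{1..n}. n + 1 \<le> s + k} = {n+1-s..n}" using s by auto
    then have "card {k\<in>{1..n}. n + 1 \<le> s + k} = s" using s by simp
    then show "(\<Sum>k\<in>{k\<in>{1..n}. n + 1 \<le> s + k}. 1 / real s) = 1" using s by simp
  qed
  finally show ?thesis by simp
qed

lemma tail_tele:
  fixes n k :: nat assumes n1: "1 \<le> n"
  defines "u \<equiv> \<lambda>l::nat. 1 / (real (max l (n+k+1)) - real k - 1)"
  shows "(\<lambda>l. u l - u (Suc l)) sums (1 / real n)"
    and "\<And>l. n + k < l \<Longrightarrow> 1 / ((real l - real k) * real l) \<le> u l - u (Suc l)"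
    and "\<And>l. 0 \<le> u l - u (Suc l)"
proof -
  have lim: "u \<longlonglongrightarrow> 0"
  proof (rule LIMSEQ_offset[where k="n+k+1"])
    have e: "u (l + (n+k+1)) = 1 / (real l + real n)" for l
      unfolding u_def by (simp add: max_def)
    show "(\<lambda>l. u (l + (n+k+1))) \<longlonglongrightarrow> 0"
      unfolding e
    proof (rule Lim_null_comparison[OF _ LIMSEQ_inverse_real_of_nat])
      show "\<forall>\<^sub>F l in sequentially. norm (1 / (real l + real n)) \<le> inverse (real (Suc l))"
        using n1 by (intro always_eventually allI) (auto simp: field_simps)
    qed
  qed
  have u0: "u 0 = 1 / real n" unfolding u_def by simp
  show "(\<lambda>l. u l - u (Suc l)) sums (1 / real n)"
    using telescope_sums'[OF lim] u0 by simp
  show *: "1 / ((real l - real k) * real l) \<le> u l - u (Suc l)" if l: "n + k < l" for l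
  proof -
    define a where "a = real l - real k - 1"
    have a1: "1 \<le> a" "a \<le> real l" unfolding a_def using l n1 by auto
    have ul: "u l = 1 / a" "u (Suc l) = 1 / (a + 1)" unfolding u_def a_def using l by (auto simp: max_def)
    have "u l - u (Suc l) = 1 / a - 1 / (a + 1)" unfolding ul ..
    also have "\<dots> = 1 / (a * (a + 1))" using a1 by (simp add: field_simps)
    finally have "u l - u (Suc l) = 1 / (a * (a + 1))" .
    moreover have e: "real l - real k = a + 1" unfolding a_def by simp
    moreover have "1 / ((a + 1) * real l) \<le> 1 / (a * (a + 1))"
    proof (rule divide_left_mono)
      show "a * (a + 1) \<le> (a + 1) * real l" using a1 by (simp add: mult.commute mult_left_mono)
      show "0 < (a + 1) * real l * (a * (a + 1))" using a1 by (intro mult_pos_pos) auto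
    qed simp
    ultimately show ?thesis by (metis)
  qed
  show "0 \<le> u l - u (Suc l)" for l
  proof (cases "n + k < l")
    case True
    have "0 \<le> 1 / ((real l - real k) * real l)" using True by auto
    then show ?thesis using *[OF True] by linarith
  next
    case False
    then have "u l = u (Suc l)" unfolding u_def by (simp add: max_def)
    then show ?thesis by simp
  qed
qed

lemma T1_real:
  fixes n k :: nat and c2 :: real
  assumes n1: "1 \<le> n" and k: "1 \<le> k" "k \<le> n" and c2: "0 \<le> c2"
  shows "(\<Sum>l. ennreal (if k < l \<and> n < l then c2 / ((real l - real k) * real l) else 0))
      \<le> ennreal (c2 / (real n + 1) * (\<Sum>l=n+1..n+k. 1 / (real l - real k)) + c2 / real n)"
proof -
  define u where "u l = 1 / (real (max l (n+k+1)) - real k - 1)" for l :: nat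
  note tt = tail_tele[OF n1, where k=k, folded u_def]
  define h where "h l = (if k < l \<and> n < l then c2 / ((real l - real k) * real l) else 0)" for l
  define h1 where "h1 l = (if n < l \<and> l \<le> n + k then c2 / ((real l - real k) * (real n + 1)) else 0)" for l
  define h2 where "h2 l = c2 * (u l - u (Suc l))" for l
  have h1s: "h1 sums (\<Sum>l=n+1..n+k. h1 l)"
    by (rule sums_finite) (auto simp: h1_def)
  have h2s: "h2 sums (c2 * (1 / real n))"
    unfolding h2_def using sums_mult[OF tt(1), of c2] by simp
  have h1nn: "0 \<le> h1 l" for l unfolding h1_def using k c2 by (auto intro!: divide_nonneg_nonneg mult_nonneg_nonneg)
  have h2nn: "0 \<le> h2 l" for l unfolding h2_def using tt(3) c2 by auto
  have le: "h l \<le> h1 l + h2 l" for l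
  proof -
    consider "l \<le> n" | "n < l" "l \<le> n + k" | "n + k < l" by linarith
    then show ?thesis
    proof cases
      case 1 then show ?thesis unfolding h_def using h1nn h2nn by auto
    next
      case 2
      have "c2 / ((real l - real k) * real l) \<le> c2 / ((real l - real k) * (real n + 1))"
        using 2 k c2 by (intro divide_left_mono mult_mono) auto
      then show ?thesis unfolding h_def h1_def using 2 k h2nn[of l] by auto
    next
      case 3
      have "c2 / ((real l - real k) * real l) = c2 * (1 / ((real l - real k) * real l))" by simp
      also have "\<dots> \<le> h2 l" unfolding h2_def using tt(2)[OF 3] c2 by (intro mult_left_mono) auto
      finally show ?thesis unfolding h_def h1_def using 3 k by auto
    qed
  qed
  have "(\<Sum>l. ennreal (h l)) \<le> (\<Sum>l. ennreal (h1 l + h2 l))"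
    by (intro suminf_le summableI ennreal_leI le)
  also have "\<dots> = ennreal (\<Sum>l. h1 l + h2 l)"
    using h1nn h2nn by (intro suminf_ennreal2 add_nonneg_nonneg summable_add sums_summable[OF h1s] sums_summable[OF h2s]) auto
  also have "(\<Sum>l. h1 l + h2 l) = (\<Sum>l=n+1..n+k. h1 l) + c2 * (1 / real n)"
    using sums_unique[OF sums_add[OF h1s h2s]] by simp
  also have "(\<Sum>l=n+1..n+k. h1 l) = c2 / (real n + 1) * (\<Sum>l=n+1..n+k. 1 / (real l - real k))"
    unfolding sum_distrib_left h1_def by (intro sum.cong) auto
  finally show ?thesis unfolding h_def by simp
qed

lemma T1_total:
  fixes n :: nat and c2 :: real
  assumes n1: "1 \<le> n" and c2: "0 \<le> c2"
  shows "(\<Sum>k=1..n. ennreal (c2 / (real n + 1) * (\<Sum>l=n+1..n+k. 1 / (real l - real k)) + c2 / real n))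
     \<le> ennreal (2 * c2)"
proof -
  have nn: "0 \<le> c2 / (real n + 1) * (\<Sum>l=n+1..n+k. 1 / (real l - real k)) + c2 / real n" if "k \<in> {1..n}" for k
    using that c2 by (intro add_nonneg_nonneg mult_nonneg_nonneg sum_nonneg) auto
  have "(\<Sum>k=1..n. c2 / (real n + 1) * (\<Sum>l=n+1..n+k. 1 / (real l - real k)) + c2 / real n)
      = c2 / (real n + 1) * real n + c2"
  proof -
    have "(\<Sum>k=1..n. c2 / (real n + 1) * (\<Sum>l=n+1..n+k. 1 / (real l - real k)) + c2 / real n)
       = c2 / (real n + 1) * (\<Sum>k=1..n. \<Sum>l=n+1..n+k. 1 / (real l - real k)) + real n * (c2 / real n)"
      by (simp only: sum.distrib sum_distrib_left[symmetric]) simp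
    also have "\<dots> = c2 / (real n + 1) * real n + c2" unfolding swap_sum using n1 by simp
    finally show ?thesis .
  qed
  also have "\<dots> \<le> 2 * c2"
  proof -
    have "c2 / (real n + 1) * real n \<le> c2" using c2 by (simp add: field_simps)
    then show ?thesis by simp
  qed
  finally show ?thesis using nn by (subst sum_ennreal) (auto intro: ennreal_leI)
qed

lemma T2_f:
  fixes n k :: nat and c2 :: real
  assumes k: "1 \<le> k" and c2: "0 \<le> c2"
  shows "(\<Sum>l=1..n+1. (if k < l \<and> l \<le> n then c2 / ((real l - real k) * real l) else 0)) \<le> c2 * Hs k / real k"
proof -
  have "(\<Sum>l=1..n+1. (if k < l \<and> l \<le> n then c2 / ((real l - real k) * real l) else 0))
      = (\<Sum>l\<in>{l\<in>{1..n+1}. k < l \<and> l \<le> n}. c2 / ((real l - real k) * real l))"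
    by (subst sum.inter_filter) auto
  also have "{l\<in>{1..n+1}. k < l \<and> l \<le> n} = {1+k..(n-k)+k}" using k by auto
  also have "(\<Sum>l\<in>{1+k..(n-k)+k}. c2 / ((real l - real k) * real l)) = (\<Sum>s=1..n-k. c2 / ((real (s+k) - real k) * real (s+k)))"
    by (rule sum.shift_bounds_cl_nat_ivl)
  also have "\<dots> = c2 * (\<Sum>s=1..n-k. 1 / (real s * (real s + real k)))"
    unfolding sum_distrib_left by (intro sum.cong) auto
  also have "\<dots> \<le> c2 * (Hs k / real k)"
    using recip_sum_le[OF k] c2 by (intro mult_left_mono) auto
  finally show ?thesis by simp
qed

lemma T2_g:
  fixes n k l :: nat and c :: real
  assumes c: "0 \<le> c"
  shows "(\<Sum>l'=1..n+1. (if k < l' \<and> l' - k \<le> n then c / real (l' - k) else 0) + (if l' = l + k then 1 else 0))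
     \<le> c * Hs n + 1"
proof -
  have a: "(\<Sum>l'=1..n+1. (if l' = l + k then 1 else 0::real)) \<le> 1"
    by (subst sum.delta) auto
  have "(\<Sum>l'=1..n+1. (if k < l' \<and> l' - k \<le> n then c / real (l' - k) else 0))
      = (\<Sum>l'\<in>{l'\<in>{1..n+1}. k < l' \<and> l' - k \<le> n}. c / real (l' - k))"
    by (subst sum.inter_filter) auto
  also have "\<dots> \<le> (\<Sum>l'\<in>{1+k..n+k}. c / real (l' - k))"
    using c by (intro sum_mono2) auto
  also have "\<dots> = (\<Sum>s=1..n. c / real (s + k - k))"
    by (rule sum.shift_bounds_cl_nat_ivl)
  also have "\<dots> = c * Hs n" unfolding Hs_def sum_distrib_left by simp
  finally show ?thesis using a by (simp add: sum.distrib)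
qed

lemma T2_total:
  fixes n :: nat and c2 K :: real and Q :: "nat \<Rightarrow> real"
  assumes K: "0 \<le> K" "0 \<le> c2" and Q: "\<And>k. k \<in> {1..n} \<Longrightarrow> Q k \<le> (c2 * Hs k / real k) * K"
  shows "(\<Sum>k=1..n. Q k / real k) \<le> 6 * c2 * K"
proof -
  have "(\<Sum>k=1..n. Q k / real k) \<le> (\<Sum>k=1..n. (c2 * K) * (Hs k / (real k)^2))"
  proof (intro sum_mono)
    fix k assume k: "k \<in> {1..n}"
    have "Q k / real k \<le> (c2 * Hs k / real k) * K / real k"
      using Q[OF k] k by (intro divide_right_mono) auto
    also have "\<dots> = (c2 * K) * (Hs k / (real k)^2)" by (simp add: power2_eq_square)
    finally show "Q k / real k \<le> (c2 * K) * (Hs k / (real k)^2)" .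
  qed
  also have "\<dots> = (c2 * K) * (\<Sum>k=1..n. Hs k / (real k)^2)" by (simp add: sum_distrib_left)
  also have "\<dots> \<le> (c2 * K) * 6" using Hs_series[of n] K by (intro mult_left_mono) auto
  finally show ?thesis by simp
qed

lemma m_le_n: assumes "1 \<le> n" "t \<le> 1" shows "nat \<lfloor>real n powr t\<rfloor> \<le> n"
proof -
  have "real n powr t \<le> real n powr 1" using assms by (intro powr_mono) auto
  then have "real n powr t \<le> real n" using assms by simp
  then have "\<lfloor>real n powr t\<rfloor> \<le> int n" by (simp add: floor_le_iff)
  then show ?thesis by simp
qed

lemma pointwise:
  fixes b :: "nat \<Rightarrow> bool" and n m :: nat
  assumes b1: "b 1" and n: "1 \<le> n" and m: "m \<le> n"
  shows "ennreal \<bar>ln (invol m (cyc_counts b n)) - ln (Bm m (Z0 b))\<bar>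
   \<le> ennreal (ln (real n)) * (1 + (\<Sum>k=1..n. emeasure (count_space UNIV) {l. n < l \<and> l \<in> Sp (yw b) k}))
     + (\<Sum>k=1..n. ennreal (real (card {p\<in>Sp (feller_word b n) k \<times> Sp (feller_word b n) k. fst p < snd p}) / real k))"
proof -
  define C where "C k = real (cyc_counts b n k)" for k
  define Z where "Z k = real (Z0 b k)" for k
  define P where "P k = real (card {p\<in>Sp (feller_word b n) k \<times> Sp (feller_word b n) k. fst p < snd p})" for k
  have lnS: "ln (Sk k (cyc_counts b n k)) \<le> P k / real k" if k: "1 \<le> k" for k
  proof -
    have "ln (Sk k (cyc_counts b n k)) \<le> C k * (C k - 1) / (2 * real k)"
      using ln_Sk(2)[OF k] unfolding C_def .
    also have "C k * (C k - 1) = 2 * P k"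
      unfolding C_def P_def cyc_Sp by (rule pairs_card[OF finite_Sp_fw])
    finally show ?thesis using k by simp
  qed
  have lnS0: "0 \<le> ln (Sk k (cyc_counts b n k))" if "1 \<le> k" for k using ln_Sk(1)[OF that] .
  have P0: "0 \<le> P k" for k unfolding P_def by simp
  have ln0: "0 \<le> ln (real n)" using n by simp
  have diff: "ln (invol m (cyc_counts b n)) - ln (Bm m (Z0 b))
      = (\<Sum>k=1..m. (C k - Z k) * ln (real k)) + (\<Sum>k=1..m. ln (Sk k (cyc_counts b n k)))"
    unfolding ln_invol ln_Bm C_def Z_def by (simp add: sum_subtractf left_diff_distrib)
  define A where "A = (\<Sum>k=1..n. \<bar>C k - Z k\<bar>)"
  define B where "B = (\<Sum>k=1..n. P k / real k)"
  have "\<bar>ln (invol m (cyc_counts b n)) - ln (Bm m (Z0 b))\<bar>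
      \<le> \<bar>\<Sum>k=1..m. (C k - Z k) * ln (real k)\<bar> + \<bar>\<Sum>k=1..m. ln (Sk k (cyc_counts b n k))\<bar>"
    unfolding diff by (rule abs_triangle_ineq)
  also have "\<bar>\<Sum>k=1..m. (C k - Z k) * ln (real k)\<bar> \<le> ln (real n) * A"
  proof -
    have "\<bar>\<Sum>k=1..m. (C k - Z k) * ln (real k)\<bar> \<le> (\<Sum>k=1..m. \<bar>(C k - Z k) * ln (real k)\<bar>)"
      by (rule sum_abs)
    also have "\<dots> \<le> (\<Sum>k=1..m. \<bar>C k - Z k\<bar> * ln (real n))"
    proof (intro sum_mono)
      fix k assume k: "k \<in> {1..m}"
      have "\<bar>ln (real k)\<bar> \<le> ln (real n)" using k m by auto
      then show "\<bar>(C k - Z k) * ln (real k)\<bar> \<le> \<bar>C k - Z k\<bar> * ln (real n)"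
        unfolding abs_mult by (intro mult_left_mono) auto
    qed
    also have "\<dots> \<le> (\<Sum>k=1..n. \<bar>C k - Z k\<bar> * ln (real n))"
      using m ln0 by (intro sum_mono2) auto
    also have "\<dots> = ln (real n) * A" unfolding A_def by (simp add: sum_distrib_left mult.commute)
    finally show ?thesis .
  qed
  also have "\<bar>\<Sum>k=1..m. ln (Sk k (cyc_counts b n k))\<bar> \<le> B"
  proof -
    have "\<bar>\<Sum>k=1..m. ln (Sk k (cyc_counts b n k))\<bar> = (\<Sum>k=1..m. ln (Sk k (cyc_counts b n k)))"
      using lnS0 by (intro abs_of_nonneg sum_nonneg) auto
    also have "\<dots> \<le> (\<Sum>k=1..m. P k / real k)" using lnS by (intro sum_mono) auto
    also have "\<dots> \<le> B" unfolding B_def using m P0 by (intro sum_mono2) auto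
    finally show ?thesis .
  qed
  finally have main: "\<bar>ln (invol m (cyc_counts b n)) - ln (Bm m (Z0 b))\<bar> \<le> ln (real n) * A + B"
    by simp
  have A0: "0 \<le> A" unfolding A_def by (intro sum_nonneg) auto
  have B0: "0 \<le> B" unfolding B_def using P0 by (intro sum_nonneg divide_nonneg_nonneg) auto
  have "ennreal \<bar>ln (invol m (cyc_counts b n)) - ln (Bm m (Z0 b))\<bar> \<le> ennreal (ln (real n) * A + B)"
    using main by (rule ennreal_leI)
  also have "\<dots> = ennreal (ln (real n)) * ennreal A + ennreal B"
    using A0 B0 ln0 by (simp add: ennreal_plus ennreal_mult)
  also have "ennreal A \<le> 1 + (\<Sum>k=1..n. emeasure (count_space UNIV) {l. n < l \<and> l \<in> Sp (yw b) k})"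
  proof -
    have "ennreal A = (\<Sum>k=1..n. ennreal \<bar>C k - Z k\<bar>)" unfolding A_def by (subst sum_ennreal) auto
    also have "\<dots> \<le> (\<Sum>k=1..n. of_bool (n+1 \<in> Sp (feller_word b n) k) + emeasure (count_space UNIV) {l. n < l \<and> l \<in> Sp (yw b) k})"
      unfolding C_def Z_def cyc_Sp Z0_Sp by (intro sum_mono diff_bound[of b, OF b1])
    also have "\<dots> = (\<Sum>k=1..n. of_bool (n+1 \<in> Sp (feller_word b n) k)) + (\<Sum>k=1..n. emeasure (count_space UNIV) {l. n < l \<and> l \<in> Sp (yw b) k})"
      by (rule sum.distrib)
    also have "\<dots> \<le> 1 + (\<Sum>k=1..n. emeasure (count_space UNIV) {l. n < l \<and> l \<in> Sp (yw b) k})"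
      by (intro add_right_mono sum_end_le1) auto
    finally show ?thesis .
  qed
  also have "ennreal B = (\<Sum>k=1..n. ennreal (real (card {p\<in>Sp (feller_word b n) k \<times> Sp (feller_word b n) k. fst p < snd p}) / real k))"
    unfolding B_def P_def by (subst sum_ennreal) auto
  finally show ?thesis by (simp add: mult_left_mono add_right_mono)
qed

locale feller = prob_space M for M :: "'a measure" +
  fixes \<theta> :: real and \<beta> :: "nat \<Rightarrow> 'a \<Rightarrow> bool"
  assumes th: "\<theta> > 0"
  and ind: "indep_vars (\<lambda>_. count_space UNIV) \<beta> {1..}"
  and pr: "\<And>j. j \<ge> 1 \<Longrightarrow> measure M {\<omega> \<in> space M. \<beta> j \<omega>} = \<theta> / (\<theta> + real j - 1)"
begin

definition cc where "cc = max 1 \<theta>"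

lemma cc1: "1 \<le> cc" unfolding cc_def by simp

lemma p_le: assumes j: "1 \<le> j" shows "\<theta> / (\<theta> + real j - 1) \<le> cc / real j"
proof (cases "1 \<le> \<theta>")
  case True
  then have "cc = \<theta>" unfolding cc_def by simp
  moreover have "\<theta> / (\<theta> + real j - 1) \<le> \<theta> / real j"
    using True j th by (intro divide_left_mono) auto
  ultimately show ?thesis by simp
next
  case False
  then have c: "cc = 1" unfolding cc_def by simp
  have "0 \<le> (1 - \<theta>) * (real j - 1)" using False j by (intro mult_nonneg_nonneg) auto
  then have h: "\<theta> * real j \<le> \<theta> + real j - 1" by (simp add: algebra_simps)
  have pos: "0 < \<theta> + real j - 1" using th j by simp
  show ?thesis unfolding c using h pos j by (simp add: field_simps)
qed

lemma Aj_sets: assumes "1 \<le> j" shows "{\<omega>\<in>space M. \<beta> j \<omega>} \<in> events"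
proof -
  have "random_variable (count_space UNIV) (\<beta> j)" using ind assms unfolding indep_vars_def2 by auto
  then have "\<beta> j -` {True} \<inter> space M \<in> events" by (rule measurable_sets) simp
  moreover have "\<beta> j -` {True} \<inter> space M = {\<omega>\<in>space M. \<beta> j \<omega>}" by auto
  ultimately show ?thesis by simp
qed

lemma indep: "indep_events (\<lambda>j. {\<omega>\<in>space M. \<beta> j \<omega>}) {1..}"
  using indep_eventsI_indep_vars[OF ind, where P="\<lambda>i x. x"] by simp

lemma sets_all: assumes "finite G" "G \<subseteq> {1..}" shows "{\<omega>\<in>space M. \<forall>j\<in>G. \<beta> j \<omega>} \<in> events"
  using assms Aj_sets by (intro sets.sets_Collect_finite_All) auto

lemma prob_all: assumes G: "finite G" "G \<subseteq> {1..}"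
  shows "prob {\<omega>\<in>space M. \<forall>j\<in>G. \<beta> j \<omega>} \<le> (\<Prod>j\<in>G. cc / real j)"
proof (cases "G = {}")
  case True then show ?thesis by (simp add: prob_space)
next
  case False
  have "{\<omega>\<in>space M. \<forall>j\<in>G. \<beta> j \<omega>} = (\<Inter>j\<in>G. {\<omega>\<in>space M. \<beta> j \<omega>})" using False by auto
  then have "prob {\<omega>\<in>space M. \<forall>j\<in>G. \<beta> j \<omega>} = (\<Prod>j\<in>G. prob {\<omega>\<in>space M. \<beta> j \<omega>})"
    using indep G False unfolding indep_events_def by auto
  also have "\<dots> \<le> (\<Prod>j\<in>G. cc / real j)"
  proof (intro prod_mono conjI)
    fix j assume "j \<in> G"
    then have j: "1 \<le> j" using G by auto
    show "0 \<le> prob {\<omega>\<in>space M. \<beta> j \<omega>}" by simp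
    show "prob {\<omega>\<in>space M. \<beta> j \<omega>} \<le> cc / real j" using pr[OF j] p_le[OF j] by simp
  qed
  finally show ?thesis .
qed

lemma fw_set1: "{\<omega>\<in>space M. feller_word (\<lambda>j. \<beta> j \<omega>) n j} \<in> events"
proof -
  consider "j = 1 \<or> j = n + 1" | "j \<noteq> 1" "j \<noteq> n+1" "2 \<le> j \<and> j \<le> n" | "j \<noteq> 1" "j \<noteq> n+1" "\<not> (2 \<le> j \<and> j \<le> n)"
    by blast
  then show ?thesis
  proof cases
    case 1
    then have e: "{\<omega>\<in>space M. feller_word (\<lambda>j. \<beta> j \<omega>) n j} = space M" unfolding feller_word_def by auto
    show ?thesis unfolding e by simp
  next
    case 2
    then have "{\<omega>\<in>space M. feller_word (\<lambda>j. \<beta> j \<omega>) n j} = {\<omega>\<in>space M. \<beta> j \<omega>}" unfolding feller_word_def by auto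
    then show ?thesis using Aj_sets[of j] 2 by simp
  next
    case 3
    then have e: "{\<omega>\<in>space M. feller_word (\<lambda>j. \<beta> j \<omega>) n j} = {}" unfolding feller_word_def by auto
    show ?thesis unfolding e by simp
  qed
qed

lemma fw_sets: "finite G \<Longrightarrow> {\<omega>\<in>space M. \<forall>j\<in>G. feller_word (\<lambda>j. \<beta> j \<omega>) n j} \<in> events"
  using fw_set1 by (intro sets.sets_Collect_finite_All) auto

lemma prob_fw: assumes G: "finite G" "G \<subseteq> {1..n}"
  shows "prob {\<omega>\<in>space M. \<forall>j\<in>G. feller_word (\<lambda>j. \<beta> j \<omega>) n j} \<le> (\<Prod>j\<in>G. cc / real j)"
proof -
  have sub: "{\<omega>\<in>space M. \<forall>j\<in>G. feller_word (\<lambda>j. \<beta> j \<omega>) n j} \<subseteq> {\<omega>\<in>space M. \<forall>j\<in>G - {1}. \<beta> j \<omega>}"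
    using G unfolding feller_word_def by auto
  have G1: "finite (G - {1})" "G - {1} \<subseteq> {1..}" using G by auto
  have "prob {\<omega>\<in>space M. \<forall>j\<in>G. feller_word (\<lambda>j. \<beta> j \<omega>) n j} \<le> prob {\<omega>\<in>space M. \<forall>j\<in>G - {1}. \<beta> j \<omega>}"
    using sub sets_all[OF G1] by (intro finite_measure_mono) auto
  also have "\<dots> \<le> (\<Prod>j\<in>G - {1}. cc / real j)" by (rule prob_all[OF G1])
  also have "\<dots> \<le> (\<Prod>j\<in>G. cc / real j)"
  proof (cases "1 \<in> G")
    case True
    have nn: "0 \<le> (\<Prod>j\<in>G - {1}. cc / real j)" using cc1 by (intro prod_nonneg) auto
    have "(\<Prod>j\<in>G. cc / real j) = cc / real 1 * (\<Prod>j\<in>G - {1}. cc / real j)"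
      using True G by (subst prod.remove[of G 1]) auto
    also have "\<dots> \<ge> (\<Prod>j\<in>G - {1}. cc / real j)" using mult_right_mono[OF cc1 nn] by simp
    finally show ?thesis .
  qed simp
  finally show ?thesis .
qed

definition E1 :: "nat \<Rightarrow> nat \<Rightarrow> nat \<Rightarrow> 'a set" where
  "E1 n k l = (if 1 \<le> k \<and> k < l \<and> n < l then {\<omega>\<in>space M. \<forall>j\<in>{l-k, l}. \<beta> j \<omega>} else {})"

definition E2 :: "nat \<Rightarrow> nat \<Rightarrow> nat \<Rightarrow> nat \<Rightarrow> 'a set" where
  "E2 n k l l' = (if 1 \<le> k \<and> k < l \<and> l + k \<le> l' \<and> l' \<le> n + 1
     then {\<omega>\<in>space M. \<forall>j\<in>{l-k, l, l'-k}. feller_word (\<lambda>j. \<beta> j \<omega>) n j} else {})"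

lemma E1_sets[measurable]: "E1 n k l \<in> events"
  unfolding E1_def using sets_all[of "{l-k, l}"] by auto

lemma E2_sets[measurable]: "E2 n k l l' \<in> events"
  unfolding E2_def using fw_sets[of "{l-k, l, l'-k}" n] by auto

lemma prob_E1: "prob (E1 n k l) \<le> (if k < l \<and> n < l then cc^2 / ((real l - real k) * real l) else 0)"
proof (cases "1 \<le> k \<and> k < l \<and> n < l")
  case True
  have G: "finite {l-k, l}" "{l-k, l} \<subseteq> {1..}" using True by auto
  have "prob (E1 n k l) \<le> (\<Prod>j\<in>{l-k, l}. cc / real j)" unfolding E1_def using True prob_all[OF G] by simp
  also have "\<dots> = cc^2 / ((real l - real k) * real l)"
  proof -
    have d: "l - k \<noteq> l" using True by auto
    show ?thesis using True d by (simp add: of_nat_diff power2_eq_square)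
  qed
  finally show ?thesis using True by simp
next
  case False
  then have "E1 n k l = {}" unfolding E1_def by auto
  then show ?thesis by simp
qed

lemma prob_E2: assumes k: "1 \<le> k"
  shows "prob (E2 n k l l') \<le> (if k < l \<and> l \<le> n then cc^2 / ((real l - real k) * real l) else 0) *
    ((if k < l' \<and> l' - k \<le> n then cc / real (l' - k) else 0) + (if l' = l + k then 1 else 0))"
proof (cases "k < l \<and> l + k \<le> l' \<and> l' \<le> n + 1")
  case True
  have G: "finite {l-k, l, l'-k}" "{l-k, l, l'-k} \<subseteq> {1..n}" using True k by auto
  have d: "l - k \<noteq> l" "l' - k \<noteq> l - k" using True k by auto
  have f: "(if k < l \<and> l \<le> n then cc^2 / ((real l - real k) * real l) else 0) = cc^2 / ((real l - real k) * real l)"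
    using True k by auto
  have g: "(if k < l' \<and> l' - k \<le> n then cc / real (l' - k) else 0) = cc / real (l' - k)"
    using True k by auto
  have f0: "0 \<le> cc^2 / ((real l - real k) * real l)" using True by auto
  have "prob (E2 n k l l') \<le> (\<Prod>j\<in>{l-k, l, l'-k}. cc / real j)"
    unfolding E2_def using True k prob_fw[OF G] by simp
  also have "\<dots> \<le> cc^2 / ((real l - real k) * real l) * (cc / real (l' - k) + (if l' = l + k then 1 else 0))"
  proof (cases "l' = l + k")
    case True2: True
    then have "{l-k, l, l'-k} = {l-k, l}" by auto
    then have "(\<Prod>j\<in>{l-k, l, l'-k}. cc / real j) = cc^2 / ((real l - real k) * real l)"
      using True d by (simp add: of_nat_diff power2_eq_square)
    also have "\<dots> \<le> cc^2 / ((real l - real k) * real l) * (cc / real (l' - k) + 1)"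
      using mult_left_mono[of 1 "cc / real (l' - k) + 1", OF _ f0] cc1 by simp
    finally show ?thesis using True2 by simp
  next
    case False
    then have "l' - k \<noteq> l" using True by auto
    then have "(\<Prod>j\<in>{l-k, l, l'-k}. cc / real j) = cc^2 / ((real l - real k) * real l) * (cc / real (l' - k))"
      using True d by (simp add: of_nat_diff power2_eq_square)
    then show ?thesis using False by simp
  qed
  finally show ?thesis unfolding f g .
next
  case False
  then have "E2 n k l l' = {}" unfolding E2_def by auto
  then have "prob (E2 n k l l') = 0" by simp
  moreover have "0 \<le> (if k < l \<and> l \<le> n then cc^2 / ((real l - real k) * real l) else 0) *
    ((if k < l' \<and> l' - k \<le> n then cc / real (l' - k) else 0) + (if l' = l + k then 1 else 0))"
    using cc1 by (intro mult_nonneg_nonneg add_nonneg_nonneg) auto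
  ultimately show ?thesis by simp
qed

end

context feller
begin

lemma inc1: assumes k: "1 \<le> k" and w: "\<omega> \<in> space M"
  shows "emeasure (count_space UNIV) {l. n < l \<and> l \<in> Sp (yw (\<lambda>j. \<beta> j \<omega>)) k} \<le> (\<Sum>l. indicator (E1 n k l) \<omega>)"
proof -
  define X where "X = {l. n < l \<and> l \<in> Sp (yw (\<lambda>j. \<beta> j \<omega>)) k}"
  have "emeasure (count_space UNIV) X = (\<integral>\<^sup>+ l. indicator X l \<partial>count_space UNIV)" by simp
  also have "\<dots> = (\<Sum>l. indicator X l)" by (rule nn_integral_count_space_nat)
  also have "\<dots> \<le> (\<Sum>l. indicator (E1 n k l) \<omega>)"
  proof (intro suminf_le summableI)
    fix l
    show "(indicator X l :: ennreal) \<le> indicator (E1 n k l) \<omega>"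
    proof (cases "l \<in> X")
      case True
      then have "1 \<le> l - k" "k \<le> l" "\<beta> (l - k) \<omega>" "\<beta> l \<omega>" "n < l"
        unfolding X_def Sp_def yw_def by auto
      then have "\<omega> \<in> E1 n k l" unfolding E1_def using k w by auto
      then show ?thesis using True by simp
    qed simp
  qed
  finally show ?thesis unfolding X_def .
qed

lemma inc2: assumes k: "1 \<le> k" and w: "\<omega> \<in> space M"
  shows "ennreal (real (card {p\<in>Sp (feller_word (\<lambda>j. \<beta> j \<omega>) n) k \<times> Sp (feller_word (\<lambda>j. \<beta> j \<omega>) n) k. fst p < snd p}) / real k)
   \<le> ennreal (1 / real k) * (\<Sum>l=1..n+1. \<Sum>l'=1..n+1. indicator (E2 n k l l') \<omega>)"
proof -
  define S where "S = Sp (feller_word (\<lambda>j. \<beta> j \<omega>) n) k"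
  define P where "P = {p\<in>S \<times> S. fst p < snd p}"
  define A where "A = {1..n+1} \<times> {1..n+1}"
  define Q where "Q = A \<inter> {p. \<omega> \<in> E2 n k (fst p) (snd p)}"
  have PQ: "P \<subseteq> Q"
  proof
    fix p assume p: "p \<in> P"
    obtain l l' where pe: "p = (l, l')" by (cases p)
    have ll: "l \<in> S" "l' \<in> S" "l < l'" using p pe unfolding P_def by auto
    have gap: "l + k \<le> l'" using Sp_gap[OF ll[unfolded S_def]] .
    have r: "l \<in> {k+1..n+1}" "l' \<in> {k+1..n+1}" using ll Sp_fw_sub unfolding S_def by blast+
    have fw: "feller_word (\<lambda>j. \<beta> j \<omega>) n (l - k)" "feller_word (\<lambda>j. \<beta> j \<omega>) n l"
      "feller_word (\<lambda>j. \<beta> j \<omega>) n (l' - k)"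
      using ll unfolding S_def Sp_def by auto
    have "\<omega> \<in> E2 n k l l'" unfolding E2_def using k gap r fw w by auto
    then show "p \<in> Q" unfolding Q_def A_def pe using r by auto
  qed
  have fQ: "finite Q" unfolding Q_def A_def by auto
  have cPQ: "card P \<le> card Q" by (rule card_mono[OF fQ PQ])
  have "(\<Sum>l=1..n+1. \<Sum>l'=1..n+1. indicator (E2 n k l l') \<omega> :: ennreal)
      = (\<Sum>p\<in>A. indicator (E2 n k (fst p) (snd p)) \<omega>)"
    unfolding A_def by (subst sum.cartesian_product) (simp add: case_prod_beta)
  also have "\<dots> = (\<Sum>p\<in>A. of_bool (\<omega> \<in> E2 n k (fst p) (snd p)))"
    by (simp add: indicator_def)
  also have "\<dots> = of_nat (card Q)" unfolding Q_def A_def by (subst sum_of_bool_eq) auto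
  finally have eq: "(\<Sum>l=1..n+1. \<Sum>l'=1..n+1. indicator (E2 n k l l') \<omega> :: ennreal) = of_nat (card Q)" .
  have "ennreal (real (card P) / real k) = ennreal (1 / real k) * ennreal (real (card P))"
    by (simp add: ennreal_mult[symmetric])
  also have "\<dots> \<le> ennreal (1 / real k) * of_nat (card Q)"
    using cPQ by (intro mult_left_mono) (auto simp: ennreal_of_nat_eq_real_of_nat)
  finally show ?thesis unfolding eq[symmetric] P_def S_def .
qed

definition Gf :: "nat \<Rightarrow> 'a \<Rightarrow> ennreal" where
  "Gf n \<omega> = ennreal (ln (real n)) * (1 + (\<Sum>k=1..n. \<Sum>l. indicator (E1 n k l) \<omega>))
     + (\<Sum>k=1..n. ennreal (1 / real k) * (\<Sum>l=1..n+1. \<Sum>l'=1..n+1. indicator (E2 n k l l') \<omega>))"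

lemma pw: assumes n: "2 \<le> n" and w: "\<omega> \<in> space M" and b1: "\<beta> 1 \<omega>" and t: "t \<in> {0..1::real}"
  shows "ennreal \<bar>ln (invol (nat \<lfloor>real n powr t\<rfloor>) (cyc_counts (\<lambda>j. \<beta> j \<omega>) n))
               - ln (Bm (nat \<lfloor>real n powr t\<rfloor>) (Z0 (\<lambda>j. \<beta> j \<omega>)))\<bar> \<le> Gf n \<omega>"
proof -
  have m: "nat \<lfloor>real n powr t\<rfloor> \<le> n" using n t by (intro m_le_n) auto
  have n1: "1 \<le> n" using n by simp
  note P = pointwise[of "\<lambda>j. \<beta> j \<omega>" n "nat \<lfloor>real n powr t\<rfloor>", OF b1 n1 m]
  have s1: "(\<Sum>k=1..n. emeasure (count_space UNIV) {l. n < l \<and> l \<in> Sp (yw (\<lambda>j. \<beta> j \<omega>)) k})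
      \<le> (\<Sum>k=1..n. \<Sum>l. indicator (E1 n k l) \<omega>)"
    using inc1 w by (intro sum_mono) auto
  have s2: "(\<Sum>k=1..n. ennreal (real (card {p\<in>Sp (feller_word (\<lambda>j. \<beta> j \<omega>) n) k \<times> Sp (feller_word (\<lambda>j. \<beta> j \<omega>) n) k. fst p < snd p}) / real k))
      \<le> (\<Sum>k=1..n. ennreal (1 / real k) * (\<Sum>l=1..n+1. \<Sum>l'=1..n+1. indicator (E2 n k l l') \<omega>))"
    using inc2 w by (intro sum_mono) auto
  show ?thesis unfolding Gf_def
    using P s1 s2 by (meson add_mono add_left_mono mult_left_mono order_trans zero_le)
qed

end

context feller
begin

lemma Qbound: assumes k: "1 \<le> k"
  shows "(\<Sum>l=1..n+1. \<Sum>l'=1..n+1. prob (E2 n k l l')) \<le> (cc^2 * Hs k / real k) * (cc * Hs n + 1)"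
proof -
  define f where "f l = (if k < l \<and> l \<le> n then cc^2 / ((real l - real k) * real l) else 0)" for l
  define g where "g l l' = (if k < l' \<and> l' - k \<le> n then cc / real (l' - k) else 0) + (if l' = l + k then 1 else 0)" for l l'
  have f0: "0 \<le> f l" for l unfolding f_def by auto
  have "(\<Sum>l=1..n+1. \<Sum>l'=1..n+1. prob (E2 n k l l')) \<le> (\<Sum>l=1..n+1. \<Sum>l'=1..n+1. f l * g l l')"
    unfolding f_def g_def using prob_E2[OF k] by (intro sum_mono) auto
  also have "\<dots> = (\<Sum>l=1..n+1. f l * (\<Sum>l'=1..n+1. g l l'))" by (simp only: sum_distrib_left)
  also have "\<dots> \<le> (\<Sum>l=1..n+1. f l * (cc * Hs n + 1))"
  proof (intro sum_mono mult_left_mono f0)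
    fix l show "(\<Sum>l'=1..n+1. g l l') \<le> cc * Hs n + 1"
      unfolding g_def by (rule T2_g) (use cc1 in simp)
  qed
  also have "\<dots> = (\<Sum>l=1..n+1. f l) * (cc * Hs n + 1)" by (simp only: sum_distrib_right)
  also have "\<dots> \<le> (cc^2 * Hs k / real k) * (cc * Hs n + 1)"
  proof (intro mult_right_mono)
    show "(\<Sum>l=1..n+1. f l) \<le> cc^2 * Hs k / real k" unfolding f_def by (rule T2_f[OF k]) simp
    show "0 \<le> cc * Hs n + 1" using cc1 Hs_nonneg[of n] by simp
  qed
  finally show ?thesis .
qed

lemma int_G: assumes n: "2 \<le> n"
  shows "(\<integral>\<^sup>+\<omega>. Gf n \<omega> \<partial>M) \<le> ennreal (ln (real n)) * (1 + ennreal (2 * cc^2)) + ennreal (6 * cc^2 * (cc * Hs n + 1))"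
proof -
  have n1: "1 \<le> n" using n by simp
  have mE1: "(\<lambda>\<omega>. indicator (E1 n k l) \<omega> :: ennreal) \<in> borel_measurable M" for k l by measurable
  have mE2: "(\<lambda>\<omega>. indicator (E2 n k l l') \<omega> :: ennreal) \<in> borel_measurable M" for k l l' by measurable
  have m1: "(\<lambda>\<omega>. \<Sum>l. indicator (E1 n k l) \<omega> :: ennreal) \<in> borel_measurable M" for k by measurable
  have m2: "(\<lambda>\<omega>. \<Sum>l=1..n+1. \<Sum>l'=1..n+1. indicator (E2 n k l l') \<omega> :: ennreal) \<in> borel_measurable M" for k
    by measurable
  have m3: "(\<lambda>\<omega>. 1 + (\<Sum>k=1..n. \<Sum>l. indicator (E1 n k l) \<omega>) :: ennreal) \<in> borel_measurable M" by measurable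
  have m4: "(\<lambda>\<omega>. \<Sum>k=1..n. ennreal (1 / real k) * (\<Sum>l=1..n+1. \<Sum>l'=1..n+1. indicator (E2 n k l l') \<omega>)) \<in> borel_measurable M"
    by measurable
  have I1: "(\<integral>\<^sup>+\<omega>. (\<Sum>l. indicator (E1 n k l) \<omega> :: ennreal) \<partial>M) = (\<Sum>l. emeasure M (E1 n k l))" for k
    by (subst nn_integral_suminf) (auto intro: mE1)
  have I2: "(\<integral>\<^sup>+\<omega>. (\<Sum>l=1..n+1. \<Sum>l'=1..n+1. indicator (E2 n k l l') \<omega> :: ennreal) \<partial>M)
      = (\<Sum>l=1..n+1. \<Sum>l'=1..n+1. emeasure M (E2 n k l l'))" for k
  proof -
    have "(\<integral>\<^sup>+\<omega>. (\<Sum>l=1..n+1. \<Sum>l'=1..n+1. indicator (E2 n k l l') \<omega> :: ennreal) \<partial>M)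
       = (\<Sum>l=1..n+1. \<integral>\<^sup>+\<omega>. (\<Sum>l'=1..n+1. indicator (E2 n k l l') \<omega> :: ennreal) \<partial>M)"
      by (rule nn_integral_sum) measurable
    also have "\<dots> = (\<Sum>l=1..n+1. \<Sum>l'=1..n+1. \<integral>\<^sup>+\<omega>. (indicator (E2 n k l l') \<omega> :: ennreal) \<partial>M)"
      by (intro sum.cong refl nn_integral_sum mE2)
    finally show ?thesis by simp
  qed
  have "(\<integral>\<^sup>+\<omega>. Gf n \<omega> \<partial>M)
      = (\<integral>\<^sup>+\<omega>. ennreal (ln (real n)) * (1 + (\<Sum>k=1..n. \<Sum>l. indicator (E1 n k l) \<omega>)) \<partial>M)
        + (\<integral>\<^sup>+\<omega>. (\<Sum>k=1..n. ennreal (1 / real k) * (\<Sum>l=1..n+1. \<Sum>l'=1..n+1. indicator (E2 n k l l') \<omega>)) \<partial>M)"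
    unfolding Gf_def by (rule nn_integral_add[OF borel_measurable_times_ennreal[OF borel_measurable_const m3] m4])
  also have "(\<integral>\<^sup>+\<omega>. ennreal (ln (real n)) * (1 + (\<Sum>k=1..n. \<Sum>l. indicator (E1 n k l) \<omega>)) \<partial>M)
      = ennreal (ln (real n)) * (1 + (\<Sum>k=1..n. \<Sum>l. emeasure M (E1 n k l)))"
  proof -
    have "(\<integral>\<^sup>+\<omega>. ennreal (ln (real n)) * (1 + (\<Sum>k=1..n. \<Sum>l. indicator (E1 n k l) \<omega>)) \<partial>M)
        = ennreal (ln (real n)) * (\<integral>\<^sup>+\<omega>. (1 + (\<Sum>k=1..n. \<Sum>l. indicator (E1 n k l) \<omega>)) \<partial>M)"
      by (rule nn_integral_cmult[OF m3])
    also have "(\<integral>\<^sup>+\<omega>. (1 + (\<Sum>k=1..n. \<Sum>l. indicator (E1 n k l) \<omega>)) \<partial>M)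
        = (\<integral>\<^sup>+\<omega>. 1 \<partial>M) + (\<integral>\<^sup>+\<omega>. (\<Sum>k=1..n. \<Sum>l. indicator (E1 n k l) \<omega>) \<partial>M)"
      by (rule nn_integral_add) measurable
    also have "(\<integral>\<^sup>+\<omega>. (\<Sum>k=1..n. \<Sum>l. indicator (E1 n k l) \<omega>) \<partial>M)
        = (\<Sum>k=1..n. \<integral>\<^sup>+\<omega>. (\<Sum>l. indicator (E1 n k l) \<omega>) \<partial>M)"
      by (rule nn_integral_sum) (rule m1)
    finally show ?thesis by (simp add: I1 emeasure_space_1)
  qed
  also have "(\<integral>\<^sup>+\<omega>. (\<Sum>k=1..n. ennreal (1 / real k) * (\<Sum>l=1..n+1. \<Sum>l'=1..n+1. indicator (E2 n k l l') \<omega>)) \<partial>M)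
      = (\<Sum>k=1..n. ennreal (1 / real k) * (\<Sum>l=1..n+1. \<Sum>l'=1..n+1. emeasure M (E2 n k l l')))"
  proof -
    have "(\<integral>\<^sup>+\<omega>. (\<Sum>k=1..n. ennreal (1 / real k) * (\<Sum>l=1..n+1. \<Sum>l'=1..n+1. indicator (E2 n k l l') \<omega>)) \<partial>M)
      = (\<Sum>k=1..n. \<integral>\<^sup>+\<omega>. ennreal (1 / real k) * (\<Sum>l=1..n+1. \<Sum>l'=1..n+1. indicator (E2 n k l l') \<omega>) \<partial>M)"
      by (rule nn_integral_sum) measurable
    also have "\<dots> = (\<Sum>k=1..n. ennreal (1 / real k) * (\<Sum>l=1..n+1. \<Sum>l'=1..n+1. emeasure M (E2 n k l l')))"
      by (intro sum.cong refl) (simp only: nn_integral_cmult[OF m2] I2)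
    finally show ?thesis .
  qed
  finally have eq: "(\<integral>\<^sup>+\<omega>. Gf n \<omega> \<partial>M) = ennreal (ln (real n)) * (1 + (\<Sum>k=1..n. \<Sum>l. emeasure M (E1 n k l))) + (\<Sum>k=1..n. ennreal (1 / real k) * (\<Sum>l=1..n+1. \<Sum>l'=1..n+1. emeasure M (E2 n k l l')))" .
  have b1: "(\<Sum>k=1..n. \<Sum>l. emeasure M (E1 n k l)) \<le> ennreal (2 * cc^2)"
  proof -
    have "(\<Sum>k=1..n. \<Sum>l. emeasure M (E1 n k l))
        \<le> (\<Sum>k=1..n. ennreal (cc^2 / (real n + 1) * (\<Sum>l=n+1..n+k. 1 / (real l - real k)) + cc^2 / real n))"
    proof (intro sum_mono)
      fix k assume k: "k \<in> {1..n}"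
      have "(\<Sum>l. emeasure M (E1 n k l)) \<le> (\<Sum>l. ennreal (if k < l \<and> n < l then cc^2 / ((real l - real k) * real l) else 0))"
        using prob_E1 by (intro suminf_le summableI) (simp add: emeasure_eq_measure ennreal_leI)
      also have "\<dots> \<le> ennreal (cc^2 / (real n + 1) * (\<Sum>l=n+1..n+k. 1 / (real l - real k)) + cc^2 / real n)"
        using k n1 by (intro T1_real) auto
      finally show "(\<Sum>l. emeasure M (E1 n k l)) \<le> ennreal (cc^2 / (real n + 1) * (\<Sum>l=n+1..n+k. 1 / (real l - real k)) + cc^2 / real n)" .
    qed
    also have "\<dots> \<le> ennreal (2 * cc^2)" using n1 by (intro T1_total) auto
    finally show ?thesis .
  qed
  have b2: "(\<Sum>k=1..n. ennreal (1 / real k) * (\<Sum>l=1..n+1. \<Sum>l'=1..n+1. emeasure M (E2 n k l l')))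
      \<le> ennreal (6 * cc^2 * (cc * Hs n + 1))"
  proof -
    define Q where "Q k = (\<Sum>l=1..n+1. \<Sum>l'=1..n+1. prob (E2 n k l l'))" for k
    have Q0: "0 \<le> Q k" for k unfolding Q_def by (intro sum_nonneg) auto
    have "(\<Sum>k=1..n. ennreal (1 / real k) * (\<Sum>l=1..n+1. \<Sum>l'=1..n+1. emeasure M (E2 n k l l')))
        = (\<Sum>k=1..n. ennreal (Q k / real k))"
    proof (intro sum.cong refl)
      fix k
      have i: "(\<Sum>l'=1..n+1. emeasure M (E2 n k l l')) = ennreal (\<Sum>l'=1..n+1. prob (E2 n k l l'))" for l
        by (subst sum_ennreal[symmetric]) (auto simp: emeasure_eq_measure)
      have "(\<Sum>l=1..n+1. \<Sum>l'=1..n+1. emeasure M (E2 n k l l')) = (\<Sum>l=1..n+1. ennreal (\<Sum>l'=1..n+1. prob (E2 n k l l')))"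
        by (simp only: i)
      also have "\<dots> = ennreal (Q k)"
        unfolding Q_def by (subst sum_ennreal) (simp_all add: sum_nonneg)
      finally have "(\<Sum>l=1..n+1. \<Sum>l'=1..n+1. emeasure M (E2 n k l l')) = ennreal (Q k)" .
      then show "ennreal (1 / real k) * (\<Sum>l=1..n+1. \<Sum>l'=1..n+1. emeasure M (E2 n k l l')) = ennreal (Q k / real k)"
        using Q0[of k] by (simp add: ennreal_mult[symmetric])
    qed
    also have "\<dots> = ennreal (\<Sum>k=1..n. Q k / real k)" using Q0 by (subst sum_ennreal) auto
    also have "\<dots> \<le> ennreal (6 * cc^2 * (cc * Hs n + 1))"
      using Qbound cc1 Hs_nonneg[of n] unfolding Q_def by (intro ennreal_leI T2_total) auto
    finally show ?thesis .
  qed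
  show ?thesis unfolding eq using b1 b2 by (intro add_mono mult_left_mono add_left_mono) auto
qed

end

context feller
begin

lemma final_bound: "\<exists>C. \<forall>n\<ge>2.
    (\<integral>\<^sup>+ \<omega>. (SUP t\<in>{0..1::real}.
        ennreal \<bar>ln (invol (nat \<lfloor>real n powr t\<rfloor>) (cyc_counts (\<lambda>j. \<beta> j \<omega>) n))
               - ln (Bm (nat \<lfloor>real n powr t\<rfloor>) (Z0 (\<lambda>j. \<beta> j \<omega>)))\<bar>) \<partial>M)
      \<le> ennreal (C * ln (real n))"
proof (intro exI allI impI)
  define C where "C = 1 + 2 * cc^2 + 6 * cc^3 + 6 * cc^2 * (cc + 1) / ln 2"
  fix n :: nat assume n: "2 \<le> n"
  have p1: "prob {\<omega>\<in>space M. \<beta> 1 \<omega>} = 1" using pr[of 1] th by simp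
  have "AE \<omega> in M. \<omega> \<in> {\<omega>\<in>space M. \<beta> 1 \<omega>}" by (rule AE_prob_1[OF p1])
  then have ae: "AE \<omega> in M. \<beta> 1 \<omega> \<and> \<omega> \<in> space M" by (rule AE_mp) (auto intro!: AE_I2)
  have "(\<integral>\<^sup>+ \<omega>. (SUP t\<in>{0..1::real}.
        ennreal \<bar>ln (invol (nat \<lfloor>real n powr t\<rfloor>) (cyc_counts (\<lambda>j. \<beta> j \<omega>) n))
               - ln (Bm (nat \<lfloor>real n powr t\<rfloor>) (Z0 (\<lambda>j. \<beta> j \<omega>)))\<bar>) \<partial>M)
      \<le> (\<integral>\<^sup>+ \<omega>. Gf n \<omega> \<partial>M)"
    by (rule nn_integral_mono_AE, rule AE_mp[OF ae], intro AE_I2 impI SUP_least, rule pw[OF n]) auto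
  also have "\<dots> \<le> ennreal (ln (real n)) * (1 + ennreal (2 * cc^2)) + ennreal (6 * cc^2 * (cc * Hs n + 1))"
    by (rule int_G[OF n])
  also have "\<dots> = ennreal (ln (real n) * (1 + 2 * cc^2) + 6 * cc^2 * (cc * Hs n + 1))"
  proof -
    have l0: "0 \<le> ln (real n)" using n by simp
    have h0: "0 \<le> 6 * cc^2 * (cc * Hs n + 1)" using cc1 Hs_nonneg[of n] by simp
    have c2: "0 \<le> 2 * cc^2" by simp
    have e1: "1 + ennreal (2 * cc^2) = ennreal (1 + 2 * cc^2)" using ennreal_plus[of 1 "2 * cc^2"] c2 by simp
    have e2: "ennreal (ln (real n)) * ennreal (1 + 2 * cc^2) = ennreal (ln (real n) * (1 + 2 * cc^2))"
      using ennreal_mult[of "ln (real n)" "1 + 2 * cc^2"] l0 c2 by simp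
    have e3: "ennreal (ln (real n) * (1 + 2 * cc^2)) + ennreal (6 * cc^2 * (cc * Hs n + 1))
       = ennreal (ln (real n) * (1 + 2 * cc^2) + 6 * cc^2 * (cc * Hs n + 1))"
      using ennreal_plus[of "ln (real n) * (1 + 2 * cc^2)" "6 * cc^2 * (cc * Hs n + 1)"] l0 c2 h0 by simp
    show ?thesis unfolding e1 e2 e3 ..
  qed
  also have "\<dots> \<le> ennreal (C * ln (real n))"
  proof (rule ennreal_leI)
    define L where "L = ln (real n)"
    have l2: "ln 2 \<le> L" "0 < ln (2::real)" unfolding L_def using n by auto
    have HL: "Hs n \<le> 1 + L" unfolding L_def using n by (intro Hs_ln) auto
    have c0: "0 \<le> cc" using cc1 by simp
    have h1: "6 * cc^2 * (cc * Hs n + 1) \<le> 6 * cc^3 * L + 6 * cc^2 * (cc + 1)"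
    proof -
      have "cc * Hs n \<le> cc * (1 + L)" using HL c0 by (rule mult_left_mono)
      then have "6 * cc^2 * (cc * Hs n + 1) \<le> 6 * cc^2 * (cc * (1 + L) + 1)" by (intro mult_left_mono) auto
      also have "\<dots> = 6 * cc^3 * L + 6 * cc^2 * (cc + 1)" by (simp add: algebra_simps power3_eq_cube power2_eq_square)
      finally show ?thesis .
    qed
    have h2: "6 * cc^2 * (cc + 1) \<le> 6 * cc^2 * (cc + 1) / ln 2 * L"
    proof -
      have K0: "0 \<le> 6 * cc^2 * (cc + 1)" using c0 by simp
      have "1 \<le> L / ln 2" using l2 by simp
      then have "6 * cc^2 * (cc + 1) * 1 \<le> 6 * cc^2 * (cc + 1) * (L / ln 2)" using K0 by (rule mult_left_mono)
      then show ?thesis by simp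
    qed
    have eqC: "C * L = L * (1 + 2 * cc^2) + 6 * cc^3 * L + 6 * cc^2 * (cc + 1) / ln 2 * L"
      unfolding C_def by (simp add: algebra_simps)
    show "ln (real n) * (1 + 2 * cc^2) + 6 * cc^2 * (cc * Hs n + 1) \<le> C * ln (real n)"
      unfolding L_def[symmetric] using h1 h2 eqC by linarith
  qed
  finally show "(\<integral>\<^sup>+ \<omega>. (SUP t\<in>{0..1::real}.
        ennreal \<bar>ln (invol (nat \<lfloor>real n powr t\<rfloor>) (cyc_counts (\<lambda>j. \<beta> j \<omega>) n))
               - ln (Bm (nat \<lfloor>real n powr t\<rfloor>) (Z0 (\<lambda>j. \<beta> j \<omega>)))\<bar>) \<partial>M)
      \<le> ennreal (C * ln (real n))" .
qed

end

theorem lemma5p4: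
  fixes M :: "'a measure" and \<theta> :: real and \<beta> :: "nat \<Rightarrow> 'a \<Rightarrow> bool"
  assumes "prob_space M"
    and "\<theta> > 0"
    and "prob_space.indep_vars M (\<lambda>_. count_space UNIV) \<beta> {1..}"
    and "\<And>j. j \<ge> 1 \<Longrightarrow> measure M {\<omega> \<in> space M. \<beta> j \<omega>} = \<theta> / (\<theta> + real j - 1)"
  shows "\<exists>C. \<forall>n\<ge>2.
    (\<integral>\<^sup>+ \<omega>. (SUP t\<in>{0..1::real}.
        ennreal \<bar>ln (invol (nat \<lfloor>real n powr t\<rfloor>) (cyc_counts (\<lambda>j. \<beta> j \<omega>) n))
               - ln (Bm (nat \<lfloor>real n powr t\<rfloor>) (Z0 (\<lambda>j. \<beta> j \<omega>)))\<bar>) \<partial>M)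
      \<le> ennreal (C * ln (real n))"
proof -
  have "feller M \<theta> \<beta>" using assms unfolding feller_def feller_axioms_def by auto
  then interpret feller M \<theta> \<beta> .
  show ?thesis by (rule final_bound)
qed


end
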